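(* Assume the general-case standing hypotheses, let $\sigma\in(0,1)$, $C_1>0$, $\gamma\in[0,2)$, $C_8>0$. Then there exist $\rho>0$ and $\bar\mu\in(0,\hat\mu]$ such that for all $\mu\in(0,\bar\mu]$ and all $(x,\lambda)\in\mathcal B((x^*,\lambda^* ),\delta)$ with $l<x<u$, $\lambda^l,\lambda^u>0$, $\|(x,\lambda)-(x^\mu,\lambda^\mu)\|<\rho$, $\|F_\mu(x,\lambda)\|\le C_1\mu$ and $\|(\Delta x^N_{\mathcal A_x},\Delta\lambda^{l,N}_{\mathcal I_l},\Delta\lambda^{u,N}_{\mathcal I_u})\|\ge C_8\mu^\gamma$ (Newton direction for $\mu^+=\sigma\mu$), the following holds. Define $(\Delta x,\Delta\lambda^l,\Delta\lambda^u)$ by: $\Delta x_i\in\{\Delta x_i^S,\Delta x_i^C\}$ for $i\in\mathcal A_x$ and $\Delta x_i=0$ for $i\in\mathcal I_x$; $\Delta\lambda^l_i=\Delta\lambda^{l,C}_i$ for $i\in\mathcal I_l$ and $0$ for $i\in\mathcal A_l$; $\Delta\lambda^u_i=\Delta\lambda^{u,C}_i$ for $i\in\mathcal I_u$ and $0$ for $i\in\mathcal A_u$. Then with $(x_+^N,\lambda_+^N)=(x,\lambda)+(\Delta x^N,\Delta\lambda^N)$ and $(x_+,\lambda_+)=(x,\lambda)+(\Delta x,\Delta\lambda)$, $$\|(x_+^N,\lambda_+^N)-(x_+,\lambda_+)\|\le\|(x_+^N,\lambda_+^N)-(x,\lambda)\|.$$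
   Context: General problem: minimize $f(x)$ subject to $l\le x\le u$, $l,u\in\mathbb R^n$, $l<u$, $f$ twice continuously differentiable with locally Lipschitz Hessian; multipliers $\lambda=(\lambda^l,\lambda^u)$. $F_\mu(x,\lambda)=\begin{bmatrix}\nabla f(x)-\lambda^l+\lambda^u\\ \Lambda^l(X-L)e-\mu e\\ \Lambda^u(U-X)e-\mu e\end{bmatrix}$ with $X,L,U,\Lambda^l,\Lambda^u$ the diagonal matrices of $x,l,u,\lambda^l,\lambda^u$; $F'(x,\lambda)=\begin{bmatrix}\nabla^2f(x)&-I&I\\ \Lambda^l&X-L&0\\ -\Lambda^u&0&U-X\end{bmatrix}$; Newton direction solves $F'(x,\lambda)(\Delta x^N,\Delta\lambda^{l,N},\Delta\lambda^{u,N})=-F_{\mu^+}(x,\lambda)$. Euclidean norms. Approximations: $\Delta x_i^S=-\frac1{d_i}\big([\nabla f(x)]_i-\mu^+[\frac1{x_i-l_i}-\frac1{u_i-x_i}]\big)$ with $d_i=[\nabla^2f(x)]_{ii}+\frac{\lambda^l_i}{x_i-l_i}+\frac{\lambda^u_i}{u_i-x_i}$; $\Delta x^C_i=-(x_i-l_i)+\mu^+/\lambda^l_i$ for $i\in\mathcal A_l$, $\Delta x_i^C=(u_i-x_i)-\mu^+/\lambda^u_i$ for $i\in\mathcal A_u$; $\Delta\lambda^{l,C}_i=-\lambda^l_i+\mu^+/(x_i-l_i)$, $\Delta\lambda^{u,C}_i=-\lambda^u_i+\mu^+/(u_i-x_i)$. Sets: $\mathcal A_l=\{i:x^*_i=l_i\}$,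 $\mathcal A_u=\{i:x^*_i=u_i\}$, $\mathcal I_l,\mathcal I_u$ complements, $\mathcal A_x=\mathcal A_l\cup\mathcal A_u$, $\mathcal I_x$ its complement. Standing hypotheses: $\nabla f(x^* )-\lambda^{l*}+\lambda^{u*}=0$, $l\le x^*\le u$, $\lambda^{l*},\lambda^{u*}\ge0$, $(x^*-l)_i\lambda^{l*}_i=0$, $(u-x^* )_i\lambda^{u*}_i=0$, $(x^*-l)+\lambda^{l*}>0$, $(u-x^* )+\lambda^{u*}>0$, $[\nabla^2f(x^* )]_{\mathcal I_x\mathcal I_x}\succ0$; $\delta>0$ with $F'$ nonsingular and boundedly invertible on $\mathcal B((x^*,\lambda^* ),\delta)$; $\hat\mu>0$ with a Lipschitz barrier trajectory $(x^\mu,\lambda^\mu)\in\mathcal B((x^*,\lambda^* ),\delta)$, $F_\mu(x^\mu,\lambda^\mu)=0$, $\|(x^\mu,\lambda^\mu)-(x^*,\lambda^* )\|\le C_4\mu$ for $\mu\in(0,\hat\mu]$. *)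

theory Defs
  imports "HOL-Analysis.Analysis"
begin

text \<open>Primal-dual states (x, lambda^l, lambda^u) live in the product type below; the
  library norm on products is norm (a,b) = sqrt (norm a ^ 2 + norm b ^ 2), so the norm of
  a triple is the Euclidean norm on R^(3n).\<close>

type_synonym 'n pdstate = "(real^'n) \<times> (real^'n) \<times> (real^'n)"

definition Fmu :: "(real^'n \<Rightarrow> real^'n) \<Rightarrow> real^'n \<Rightarrow> real^'n \<Rightarrow> real \<Rightarrow> 'n pdstate \<Rightarrow> 'n pdstate" where
  "Fmu g l u \<mu> s = (case s of (x, ll, lu) \<Rightarrow>
     (g x - ll + lu,
      (\<chi> i. ll$i * (x$i - l$i) - \<mu>),
      (\<chi> i. lu$i * (u$i - x$i) - \<mu>)))"

definition Fprime :: "(real^'n \<Rightarrow> real^'n^'n) \<Rightarrow> real^'n \<Rightarrow> real^'n \<Rightarrow> 'n pdstate \<Rightarrow> 'n pdstate \<Rightarrow> 'n pdstate" where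
  "Fprime H l u s d = (case s of (x, ll, lu) \<Rightarrow> case d of (dx, dl, du) \<Rightarrow>
     (H x *v dx - dl + du,
      (\<chi> i. ll$i * dx$i + (x$i - l$i) * dl$i),
      (\<chi> i. - lu$i * dx$i + (u$i - x$i) * du$i)))"

definition dxS :: "(real^'n \<Rightarrow> real^'n) \<Rightarrow> (real^'n \<Rightarrow> real^'n^'n) \<Rightarrow> real^'n \<Rightarrow> real^'n \<Rightarrow> real \<Rightarrow> 'n pdstate \<Rightarrow> 'n \<Rightarrow> real" where
  "dxS g H l u mup s i = (case s of (x, ll, lu) \<Rightarrow>
     (let d = H x $ i $ i + ll$i / (x$i - l$i) + lu$i / (u$i - x$i)
      in - (1 / d) * (g x $ i - mup * (1 / (x$i - l$i) - 1 / (u$i - x$i)))))"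

definition dxCl :: "real^'n \<Rightarrow> real \<Rightarrow> 'n pdstate \<Rightarrow> 'n \<Rightarrow> real" where
  "dxCl l mup s i = (case s of (x, ll, lu) \<Rightarrow> - (x$i - l$i) + mup / ll$i)"

definition dxCu :: "real^'n \<Rightarrow> real \<Rightarrow> 'n pdstate \<Rightarrow> 'n \<Rightarrow> real" where
  "dxCu u mup s i = (case s of (x, ll, lu) \<Rightarrow> (u$i - x$i) - mup / lu$i)"

definition dlC :: "real^'n \<Rightarrow> real \<Rightarrow> 'n pdstate \<Rightarrow> 'n \<Rightarrow> real" where
  "dlC l mup s i = (case s of (x, ll, lu) \<Rightarrow> - ll$i + mup / (x$i - l$i))"

definition duC :: "real^'n \<Rightarrow> real \<Rightarrow> 'n pdstate \<Rightarrow> 'n \<Rightarrow> real" where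
  "duC u mup s i = (case s of (x, ll, lu) \<Rightarrow> - lu$i + mup / (u$i - x$i))"

end

theory Submission
  imports Defs
begin

lemma comp_bounds:
  fixes p :: "('n::finite) pdstate"
  shows "\<bar>fst p $ i\<bar> \<le> norm p" "\<bar>fst (snd p) $ i\<bar> \<le> norm p" "\<bar>snd (snd p) $ i\<bar> \<le> norm p"
proof -
  obtain a b c where p: "p = (a,b,c)" by (cases p) auto
  show "\<bar>fst p $ i\<bar> \<le> norm p" using component_le_norm_cart[of a i] norm_fst_le[of a "(b,c)"] p by simp
  show "\<bar>fst (snd p) $ i\<bar> \<le> norm p" using component_le_norm_cart[of b i] norm_fst_le[of b c] norm_snd_le[of "(b,c)" a] p by simp
  show "\<bar>snd (snd p) $ i\<bar> \<le> norm p" using component_le_norm_cart[of c i] norm_snd_le[of c b] norm_snd_le[of "(b,c)" a] p by simp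
qed

lemma norm_sq_vec: "(norm (v::real^('n::finite)))\<^sup>2 = (\<Sum>i\<in>UNIV. (v$i)\<^sup>2)"
  by (simp add: norm_vec_def L2_set_def sum_nonneg)

lemma norm_triple: "norm ((a::real^('n::finite)), (b::real^'n), (c::real^'n)) = sqrt (\<Sum>i\<in>UNIV. (a$i)\<^sup>2 + (b$i)\<^sup>2 + (c$i)\<^sup>2)"
  by (simp add: norm_Pair norm_sq_vec sum.distrib add.assoc sum_nonneg)

lemma core:
  fixes p q sv tv m \<mu> C1 B c0 :: real
  assumes "p > 0" "q \<ge> c0/2" "c0 > 0" "p*q \<le> (1+C1)*\<mu>" "\<bar>sv\<bar> \<le> B*\<mu>" "\<mu> > 0" "C1 > 0"
    "p * sv + q*tv = -(p*q - m)"
  shows "\<bar>tv - (-p + m/q)\<bar> \<le> 4*(1+C1)*B*\<mu>^2/c0^2"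
proof -
  have q0: "q > 0" using assms by linarith
  have h: "q*tv = m - p*q - p * sv" using assms(8) by linarith
  have "tv - (-p + m/q) = (q*tv + p*q - m)/q" using q0 by (simp add: field_simps)
  also have "\<dots> = -(p * sv/q)" using h by simp
  finally have "tv - (-p + m/q) = -(p * sv/q)" .
  hence "\<bar>tv - (-p + m/q)\<bar> = p*\<bar>sv\<bar>/q" using assms q0 by (simp add: abs_mult)
  also have "p \<le> 2*(1+C1)*\<mu>/c0"
  proof -
    have "p*(c0/2) \<le> p*q" using assms by (intro mult_left_mono) auto
    hence "p*c0 \<le> 2*(1+C1)*\<mu>" using assms by linarith
    thus ?thesis using assms by (simp add: field_simps)
  qed
  hence "p*\<bar>sv\<bar> \<le> (2*(1+C1)*\<mu>/c0) * (B*\<mu>)" using assms by (intro mult_mono) auto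
  hence "p*\<bar>sv\<bar>/q \<le> (2*(1+C1)*\<mu>/c0) * (B*\<mu>) / (c0/2)"
    using assms q0 by (intro frac_le) auto
  also have "\<dots> = 4*(1+C1)*B*\<mu>^2/c0^2" using assms by (simp add: field_simps power2_eq_square)
  finally show ?thesis .
qed

lemma dxS_alg:
  fixes a b ll lu h R dx dl du gi m d :: real
  assumes "a>0" "b>0" "d = h + ll/a + lu/b" "d>0"
    and e1: "h*dx + R - dl + du = -(gi - ll + lu)"
    and e2: "ll*dx + a*dl = -(ll*a - m)"
    and e3: "-lu*dx + b*du = -(lu*b - m)"
  shows "dx - (-(1/d)*(gi - m*(1/a - 1/b))) = -R/d"
proof -
  have dl: "dl = (-(ll*a - m) - ll*dx)/a" using e2 assms by (simp add: field_simps)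
  have du: "du = (-(lu*b - m) + lu*dx)/b" using e3 assms by (simp add: field_simps)
  have f2: "ll/a*dx = m/a - ll - dl" using e2 assms(1) by (simp add: field_simps)
  have f3: "lu/b*dx = du + lu - m/b" using e3 assms(2) by (simp add: field_simps)
  have "d*dx = h*dx + ll/a*dx + lu/b*dx" using assms(3) by (simp add: algebra_simps)
  also have "\<dots> = -(gi - m*(1/a - 1/b)) - R" unfolding f2 f3 using e1 by (simp add: algebra_simps)
  finally have dd: "d*dx = -(gi - m*(1/a - 1/b)) - R" .
  define Z where "Z = gi - m*(1/a - 1/b)"
  have dd': "d*dx = -Z - R" using dd unfolding Z_def .
  have "dx - (-(1/d)*Z) = (d*dx + Z)/d" using assms(4) by (simp add: field_simps)
  also have "\<dots> = -R/d" using dd' by simp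
  finally show ?thesis unfolding Z_def .
qed

lemma d_low:
  fixes ll a lu b h M c0 \<mu> C1 :: real
  assumes "ll \<ge> c0/2" "a > 0" "ll*a \<le> (1+C1)*\<mu>" "lu \<ge> 0" "b > 0" "\<bar>h\<bar> \<le> M"
    "\<mu> \<le> c0^2/(8*(1+C1)*(M+1))" "M \<ge> 0" "c0 > 0" "\<mu> > 0" "C1 > 0"
  shows "h + ll/a + lu/b \<ge> c0^2/(8*(1+C1)*\<mu>)"
proof -
  have ap: "a \<le> 2*(1+C1)*\<mu>/c0"
  proof -
    have "(c0/2)*a \<le> ll*a" using assms by (intro mult_right_mono) auto
    hence "c0*a \<le> 2*(1+C1)*\<mu>" using assms by linarith
    thus ?thesis using assms by (simp add: field_simps)
  qed
  have "(c0/2)/(2*(1+C1)*\<mu>/c0) \<le> ll/a"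
    using assms ap by (intro frac_le) auto
  moreover have "(c0/2)/(2*(1+C1)*\<mu>/c0) = 2*(c0^2/(8*(1+C1)*\<mu>))"
  proof -
    have c: "c0 \<noteq> 0" using assms by auto
    have eqk: "\<And>k::real. k \<noteq> 0 \<Longrightarrow> (c0/2)/(2*k/c0) = 2*(c0^2/(8*k))"
      using c by (simp add: field_simps power2_eq_square)
    have "(1+C1)*\<mu> \<noteq> 0" using assms by auto
    from eqk[OF this] show ?thesis by (simp only: mult.assoc)
  qed
  moreover have "M \<le> c0^2/(8*(1+C1)*\<mu>)"
  proof -
    have P: "8*(1+C1)*(M+1) > 0" using assms by simp
    have "\<mu>*(8*(1+C1)*(M+1)) \<le> c0^2" using assms(7) pos_le_divide_eq[OF P] by simp
    hence "(M+1)*(8*(1+C1)*\<mu>) \<le> c0^2" by (simp add: algebra_simps)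
    moreover have P2: "8*(1+C1)*\<mu> > 0" using assms by simp
    ultimately have "M+1 \<le> c0^2/(8*(1+C1)*\<mu>)" using pos_le_divide_eq[OF P2] by simp
    thus ?thesis by linarith
  qed
  moreover have "lu/b \<ge> 0" using assms by simp
  moreover have "h \<ge> -M" using assms by linarith
  ultimately show ?thesis by linarith
qed

lemma S_err:
  fixes a b ll lu h R dx dl du gi m d c0 \<mu> C1 N M B :: real
  assumes "a>0" "b>0" "d = h + ll/a + lu/b" "d \<ge> c0^2/(8*(1+C1)*\<mu>)"
    "c0 > 0" "\<mu> > 0" "C1 > 0" "\<bar>R\<bar> \<le> N*M*(B*\<mu>)" "N \<ge> 0" "M \<ge> 0" "B \<ge> 0"
    and e1: "h*dx + R - dl + du = -(gi - ll + lu)"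
    and e2: "ll*dx + a*dl = -(ll*a - m)"
    and e3: "-lu*dx + b*du = -(lu*b - m)"
  shows "\<bar>dx - (-(1/d)*(gi - m*(1/a - 1/b)))\<bar> \<le> 8*(1+C1)*B*(1+N*M)/c0^2*\<mu>^2"
proof -
  have Dp: "c0^2/(8*(1+C1)*\<mu>) > 0" using assms by simp
  hence dp: "d > 0" using assms by linarith
  have "\<bar>dx - (-(1/d)*(gi - m*(1/a - 1/b)))\<bar> = \<bar>R\<bar>/d"
    using dxS_alg[OF assms(1,2,3) dp e1 e2 e3] dp by simp
  also have "\<dots> \<le> (N*M*(B*\<mu>))/(c0^2/(8*(1+C1)*\<mu>))"
    using assms Dp by (intro frac_le) auto
  also have "\<dots> = 8*(1+C1)*B*(N*M)/c0^2*\<mu>^2" using assms by (simp add: field_simps power2_eq_square)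
  also have "\<dots> \<le> 8*(1+C1)*B*(1+N*M)/c0^2*\<mu>^2"
    using assms by (intro mult_right_mono divide_right_mono mult_left_mono) auto
  finally show ?thesis .
qed

lemma powr_part:
  fixes \<mu> \<gamma> C8 E N :: real
  assumes "0 < \<mu>" "\<mu> \<le> (C8^2/(3*N*E^2+1)) powr (1/(4-2*\<gamma>))" "\<gamma> < 2" "C8 > 0" "N \<ge> 0"
  shows "3*N*(E*\<mu>^2)^2 \<le> (C8 * \<mu> powr \<gamma>)^2"
proof -
  define P where "P = C8^2/(3*N*E^2+1)"
  have Q: "3*N*E^2+1 > 0" using assms by (simp add: add_nonneg_pos)
  have P0: "P > 0" unfolding P_def using assms Q by simp
  have "\<mu> powr (4-2*\<gamma>) \<le> (P powr (1/(4-2*\<gamma>))) powr (4-2*\<gamma>)"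
    using assms unfolding P_def by (intro powr_mono2) auto
  also have "\<dots> = P" using P0 assms by (simp add: powr_powr)
  finally have mp: "\<mu> powr (4-2*\<gamma>) \<le> P" .
  have "\<mu> powr (2*\<gamma>) * \<mu> powr (4-2*\<gamma>) = \<mu> powr (2*\<gamma> + (4-2*\<gamma>))"
    by (rule powr_add[symmetric])
  also have "\<dots> = \<mu> powr 4" by simp
  also have "\<dots> = \<mu>^4" using assms by simp
  finally have m4: "\<mu>^4 = \<mu> powr (2*\<gamma>) * \<mu> powr (4-2*\<gamma>)" by simp
  have mg: "(\<mu> powr \<gamma>)^2 = \<mu> powr (2*\<gamma>)"
    by (simp add: power2_eq_square powr_add[symmetric])
  have "3*N*(E*\<mu>^2)^2 = (3*N*E^2) * \<mu> powr (2*\<gamma>) * \<mu> powr (4-2*\<gamma>)"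
  proof -
    have "(E*\<mu>^2)^2 = E^2*\<mu>^4" by algebra
    thus ?thesis unfolding m4 by (simp only: mult_ac)
  qed
  also have "\<dots> \<le> (3*N*E^2) * \<mu> powr (2*\<gamma>) * P"
    using mp assms by (intro mult_left_mono) auto
  also have "\<dots> \<le> (3*N*E^2+1) * \<mu> powr (2*\<gamma>) * P"
    using P0 by (intro mult_right_mono) auto
  also have "\<dots> = C8^2 * \<mu> powr (2*\<gamma>)" unfolding P_def using Q by simp
  also have "\<dots> = (C8 * \<mu> powr \<gamma>)^2" by (simp add: power_mult_distrib mg)
  finally show ?thesis .
qed

lemma sq_le_of_abs: "\<bar>d::real\<bar> \<le> e \<Longrightarrow> d^2 \<le> e^2"
  using power_mono[of "\<bar>d\<bar>" e 2] by simp

lemma Rb: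
  fixes A :: "real^('n::finite)^'n" and v :: "real^'n"
  assumes "\<forall>j. \<bar>A$i$j\<bar> \<le> M" "\<forall>j. \<bar>v$j\<bar> \<le> c"
  shows "\<bar>(A *v v)$i - A$i$i * v$i\<bar> \<le> real CARD('n) * M * c"
proof -
  have "(A *v v)$i = (\<Sum>j\<in>UNIV. A$i$j * v$j)" by (simp add: matrix_vector_mult_def)
  also have "\<dots> = A$i$i * v$i + (\<Sum>j\<in>UNIV-{i}. A$i$j * v$j)" by (simp add: sum.remove)
  finally have "\<bar>(A *v v)$i - A$i$i * v$i\<bar> = \<bar>\<Sum>j\<in>UNIV-{i}. A$i$j * v$j\<bar>" by simp
  also have "\<dots> \<le> (\<Sum>j\<in>UNIV-{i}. \<bar>A$i$j * v$j\<bar>)" by (rule sum_abs)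
  also have "\<dots> \<le> (\<Sum>j\<in>UNIV. \<bar>A$i$j * v$j\<bar>)" by (intro sum_mono2) auto
  also have "\<dots> \<le> (\<Sum>j\<in>(UNIV::'n set). M*c)"
  proof (intro sum_mono)
    fix j
    have "0 \<le> M" using assms(1) by (meson abs_ge_zero order_trans)
    thus "\<bar>A$i$j * v$j\<bar> \<le> M*c" unfolding abs_mult using assms by (intro mult_mono) auto
  qed
  also have "\<dots> = real CARD('n) * M * c" by simp
  finally show ?thesis .
qed

lemma final_comb:
  fixes a b c a' b' c' :: "real^('n::finite)" and Ax Il Iu :: "'n \<Rightarrow> bool" and e t :: real
  assumes z1: "\<forall>i. \<not>Ax i \<longrightarrow> a'$i = 0" and z2: "\<forall>i. \<not>Il i \<longrightarrow> b'$i = 0" and z3: "\<forall>i. \<not> Iu i \<longrightarrow> c'$i = 0"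
    and d1: "\<forall>i. Ax i \<longrightarrow> \<bar>a$i - a'$i\<bar> \<le> e" and d2: "\<forall>i. Il i \<longrightarrow> \<bar>b$i - b'$i\<bar> \<le> e"
    and d3: "\<forall>i. Iu i \<longrightarrow> \<bar>c$i - c'$i\<bar> \<le> e"
    and et: "3*real CARD('n)*e^2 \<le> t^2"
    and tS: "t \<le> sqrt ((\<Sum>i\<in>{i. Ax i}. (a$i)\<^sup>2) + (\<Sum>i\<in>{i. Il i}. (b$i)\<^sup>2) + (\<Sum>i\<in>{i. Iu i}. (c$i)\<^sup>2))"
    and t0: "0 \<le> t"
  shows "norm (a - a', b - b', c - c') \<le> norm (a,b,c)"
proof -
  define s where "s i = (if Ax i then (a$i)^2 else 0) + (if Il i then (b$i)^2 else 0) + (if Iu i then (c$i)^2 else 0)" for i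
  define ee where "ee i = (if Ax i then (a$i - a'$i)^2 else 0) + (if Il i then (b$i - b'$i)^2 else 0) + (if Iu i then (c$i - c'$i)^2 else 0)" for i
  have per: "((a - a')$i)\<^sup>2 + ((b - b')$i)\<^sup>2 + ((c - c')$i)\<^sup>2 = ((a$i)\<^sup>2 + (b$i)\<^sup>2 + (c$i)\<^sup>2) - s i + ee i" for i
    using z1[rule_format, of i] z2[rule_format, of i] z3[rule_format, of i] unfolding s_def ee_def
    by (cases "Ax i"; cases "Il i"; cases "Iu i") simp_all
  have SA: "(\<Sum>i\<in>UNIV. s i) = (\<Sum>i\<in>{i. Ax i}. (a$i)\<^sup>2) + (\<Sum>i\<in>{i. Il i}. (b$i)\<^sup>2) + (\<Sum>i\<in>{i. Iu i}. (c$i)\<^sup>2)"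
    unfolding s_def by (simp add: sum.distrib sum.If_cases)
  have SA0: "0 \<le> (\<Sum>i\<in>{i. Ax i}. (a$i)\<^sup>2) + (\<Sum>i\<in>{i. Il i}. (b$i)\<^sup>2) + (\<Sum>i\<in>{i. Iu i}. (c$i)\<^sup>2)"
    by (intro add_nonneg_nonneg sum_nonneg) auto
  have "t^2 \<le> (sqrt ((\<Sum>i\<in>{i. Ax i}. (a$i)\<^sup>2) + (\<Sum>i\<in>{i. Il i}. (b$i)\<^sup>2) + (\<Sum>i\<in>{i. Iu i}. (c$i)\<^sup>2)))^2"
    using tS t0 by (intro power_mono) auto
  with SA0 SA have tsum: "t^2 \<le> (\<Sum>i\<in>UNIV. s i)" by simp
  have eb: "ee i \<le> 3*e^2" for i
  proof -
    have "(if Ax i then (a$i - a'$i)^2 else 0) \<le> e^2" using d1 sq_le_of_abs by auto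
    moreover have "(if Il i then (b$i - b'$i)^2 else 0) \<le> e^2" using d2 sq_le_of_abs by auto
    moreover have "(if Iu i then (c$i - c'$i)^2 else 0) \<le> e^2" using d3 sq_le_of_abs by auto
    ultimately show ?thesis unfolding ee_def by linarith
  qed
  have "(\<Sum>i\<in>UNIV. ee i) \<le> real (card (UNIV::'n set)) * (3*e^2)"
    by (rule sum_bounded_above) (rule eb)
  hence esum: "(\<Sum>i\<in>UNIV. ee i) \<le> (\<Sum>i\<in>UNIV. s i)" using et tsum by (simp add: algebra_simps)
  have "(\<Sum>i\<in>UNIV. ((a - a')$i)\<^sup>2 + ((b - b')$i)\<^sup>2 + ((c - c')$i)\<^sup>2)
      = (\<Sum>i\<in>UNIV. (a$i)\<^sup>2 + (b$i)\<^sup>2 + (c$i)\<^sup>2) - (\<Sum>i\<in>UNIV. s i) + (\<Sum>i\<in>UNIV. ee i)"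
    unfolding per by (simp add: sum.distrib sum_subtractf)
  also have "\<dots> \<le> (\<Sum>i\<in>UNIV. (a$i)\<^sup>2 + (b$i)\<^sup>2 + (c$i)\<^sup>2)" using esum by simp
  finally show ?thesis unfolding norm_triple by (intro real_sqrt_le_mono)
qed

theorem mainTheorem10:
  fixes f :: "real^'n \<Rightarrow> real"
    and g :: "real^'n \<Rightarrow> real^'n"
    and H :: "real^'n \<Rightarrow> real^'n^'n"
    and l u xs lls lus :: "real^'n"
    and traj :: "real \<Rightarrow> 'n pdstate"
    and \<delta> \<mu>hat C4 \<sigma> C1 \<gamma> C8 :: real
  assumes lu: "\<forall>i. l$i < u$i"
    and grad: "\<forall>x. (f has_derivative (\<lambda>h. g x \<bullet> h)) (at x)"
    and hess: "\<forall>x. (g has_derivative (\<lambda>h. H x *v h)) (at x)"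
    and hess_cont: "continuous_on UNIV H"
    and hess_loclip: "\<forall>x. \<exists>e>0. \<exists>L. L-lipschitz_on (cball x e) H"
    and kkt_stat: "g xs - lls + lus = 0"
    and feas: "\<forall>i. l$i \<le> xs$i \<and> xs$i \<le> u$i"
    and dual_nonneg: "\<forall>i. lls$i \<ge> 0 \<and> lus$i \<ge> 0"
    and compl: "\<forall>i. (xs$i - l$i) * lls$i = 0 \<and> (u$i - xs$i) * lus$i = 0"
    and strict: "\<forall>i. (xs$i - l$i) + lls$i > 0 \<and> (u$i - xs$i) + lus$i > 0"
    and pd: "\<forall>v::real^'n. v \<noteq> 0 \<and> (\<forall>i. xs$i = l$i \<or> xs$i = u$i \<longrightarrow> v$i = 0)
               \<longrightarrow> v \<bullet> (H xs *v v) > 0"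
    and \<delta>pos: "\<delta> > 0"
    and nonsing: "\<forall>s. dist s (xs, lls, lus) \<le> \<delta> \<longrightarrow> bij (Fprime H l u s)"
    and bdd_inv: "\<exists>K. \<forall>s d. dist s (xs, lls, lus) \<le> \<delta> \<longrightarrow> norm d \<le> K * norm (Fprime H l u s d)"
    and \<mu>hat_pos: "\<mu>hat > 0"
    and traj_lip: "\<exists>L. L-lipschitz_on {0<..\<mu>hat} traj"
    and traj_ball: "\<forall>\<mu>\<in>{0<..\<mu>hat}. dist (traj \<mu>) (xs, lls, lus) \<le> \<delta>"
    and traj_zero: "\<forall>\<mu>\<in>{0<..\<mu>hat}. Fmu g l u \<mu> (traj \<mu>) = 0"
    and traj_conv: "\<forall>\<mu>\<in>{0<..\<mu>hat}. dist (traj \<mu>) (xs, lls, lus) \<le> C4 * \<mu>"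
    and \<sigma>: "0 < \<sigma>" "\<sigma> < 1"
    and C1: "C1 > 0"
    and \<gamma>: "0 \<le> \<gamma>" "\<gamma> < 2"
    and C8: "C8 > 0"
  shows "\<exists>\<rho>>0. \<exists>\<mu>bar. 0 < \<mu>bar \<and> \<mu>bar \<le> \<mu>hat \<and>
    (\<forall>\<mu>. 0 < \<mu> \<and> \<mu> \<le> \<mu>bar \<longrightarrow>
      (\<forall>x ll lu. dist (x, ll, lu) (xs, lls, lus) \<le> \<delta>
         \<and> (\<forall>i. l$i < x$i \<and> x$i < u$i) \<and> (\<forall>i. ll$i > 0 \<and> lu$i > 0)
         \<and> dist (x, ll, lu) (traj \<mu>) < \<rho>
         \<and> norm (Fmu g l u \<mu> (x, ll, lu)) \<le> C1 * \<mu> \<longrightarrow>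
       (\<forall>dxN dlN duN.
          Fprime H l u (x, ll, lu) (dxN, dlN, duN) = - Fmu g l u (\<sigma> * \<mu>) (x, ll, lu)
          \<and> sqrt ((\<Sum>i\<in>{i. xs$i = l$i \<or> xs$i = u$i}. (dxN$i)\<^sup>2)
                 + (\<Sum>i\<in>{i. xs$i \<noteq> l$i}. (dlN$i)\<^sup>2)
                 + (\<Sum>i\<in>{i. xs$i \<noteq> u$i}. (duN$i)\<^sup>2)) \<ge> C8 * \<mu> powr \<gamma> \<longrightarrow>
        (\<forall>dx dl du.
           (\<forall>i. xs$i = l$i \<longrightarrow> dx$i \<in> {dxS g H l u (\<sigma> * \<mu>) (x, ll, lu) i, dxCl l (\<sigma> * \<mu>) (x, ll, lu) i})
           \<and> (\<forall>i. xs$i = u$i \<longrightarrow> dx$i \<in> {dxS g H l u (\<sigma> * \<mu>) (x, ll, lu) i, dxCu u (\<sigma> * \<mu>) (x, ll, lu) i})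
           \<and> (\<forall>i. xs$i \<noteq> l$i \<and> xs$i \<noteq> u$i \<longrightarrow> dx$i = 0)
           \<and> (\<forall>i. dl$i = (if xs$i \<noteq> l$i then dlC l (\<sigma> * \<mu>) (x, ll, lu) i else 0))
           \<and> (\<forall>i. du$i = (if xs$i \<noteq> u$i then duC u (\<sigma> * \<mu>) (x, ll, lu) i else 0))
           \<longrightarrow> norm (((x, ll, lu) + (dxN, dlN, duN)) - ((x, ll, lu) + (dx, dl, du)))
               \<le> norm (((x, ll, lu) + (dxN, dlN, duN)) - (x, ll, lu))))))"
  proof -
  obtain K where K: "\<forall>s d. dist s (xs, lls, lus) \<le> \<delta> \<longrightarrow> norm d \<le> K * norm (Fprime H l u s d)"
    using bdd_inv by blast
  define K1 where "K1 = max K 1"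
  have K1p: "K1 > 0" unfolding K1_def by simp
  have K1: "norm d \<le> K1 * norm (Fprime H l u s d)" if "dist s (xs, lls, lus) \<le> \<delta>" for s d
  proof -
    have "norm d \<le> K * norm (Fprime H l u s d)" using K that by blast
    also have "\<dots> \<le> K1 * norm (Fprime H l u s d)" unfolding K1_def by (intro mult_right_mono) auto
    finally show ?thesis .
  qed
  have "compact (H ` cball xs \<delta>)"
    by (intro compact_continuous_image continuous_on_subset[OF hess_cont]) auto
  then obtain M0 where M0: "\<forall>y\<in>H ` cball xs \<delta>. norm y \<le> M0"
    using compact_imp_bounded bounded_iff by metis
  define M where "M = max M0 0"
  have M0le: "M \<ge> 0" unfolding M_def by simp
  have Hb: "\<bar>H y $ i $ j\<bar> \<le> M" if "y \<in> cball xs \<delta>" for y i j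
  proof -
    have "\<bar>H y $ i $ j\<bar> \<le> norm (H y $ i)" by (rule component_le_norm_cart)
    also have "\<dots> \<le> norm (H y)" by (rule Finite_Cartesian_Product.norm_nth_le)
    also have "\<dots> \<le> M0" using M0 that by blast
    finally show ?thesis unfolding M_def by simp
  qed
  define c0 where "c0 = Min (range (\<lambda>i. min ((xs$i - l$i) + lls$i) ((u$i - xs$i) + lus$i)))"
  have c0p: "c0 > 0" unfolding c0_def using strict by (subst Min_gr_iff) auto
  have c0l: "c0 \<le> (xs$i - l$i) + lls$i" for i
  proof -
    have "c0 \<le> min ((xs$i - l$i) + lls$i) ((u$i - xs$i) + lus$i)" unfolding c0_def by (rule Min_le) auto
    thus ?thesis by simp
  qed
  have c0u: "c0 \<le> (u$i - xs$i) + lus$i" for i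
  proof -
    have "c0 \<le> min ((xs$i - l$i) + lls$i) ((u$i - xs$i) + lus$i)" unfolding c0_def by (rule Min_le) auto
    thus ?thesis by simp
  qed
  define N where "N = real CARD('n)"
  have Np: "N \<ge> 0" unfolding N_def by simp
  define B where "B = K1 * (C1 + 2*N)"
  have Bp: "B \<ge> 0" unfolding B_def using K1p C1 Np by simp
  define E where "E = 8*(1+C1)*B*(1+N*M)/c0^2"
  define \<mu>bar where "\<mu>bar = min (min \<mu>hat (c0/(4*(\<bar>C4\<bar>+1)))) (min (c0^2/(8*(1+C1)*(M+1))) ((C8^2/(3*N*E^2+1)) powr (1/(4-2*\<gamma>))))"
  have Qp: "3*N*E^2+1 > 0" using Np by (simp add: add_nonneg_pos)
  have \<mu>barp: "\<mu>bar > 0" unfolding \<mu>bar_def using \<mu>hat_pos c0p C1 M0le C8 Np Qp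
    by (auto intro!: divide_pos_pos add_nonneg_pos simp: min_def)
  show ?thesis
  proof (rule exI[of _ "c0/4"], rule conjI, simp add: c0p, rule exI[of _ \<mu>bar], intro conjI allI impI)
    show "0 < \<mu>bar" by (rule \<mu>barp)
    show "\<mu>bar \<le> \<mu>hat" unfolding \<mu>bar_def by simp
    fix \<mu> x ll lu dxN dlN duN dx dl du
    assume h\<mu>: "0 < \<mu> \<and> \<mu> \<le> \<mu>bar"
    assume hz: "dist (x, ll, lu) (xs, lls, lus) \<le> \<delta>
         \<and> (\<forall>i. l$i < x$i \<and> x$i < u$i) \<and> (\<forall>i. ll$i > 0 \<and> lu$i > 0)
         \<and> dist (x, ll, lu) (traj \<mu>) < c0/4
         \<and> norm (Fmu g l u \<mu> (x, ll, lu)) \<le> C1 * \<mu>"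
    assume hN: "Fprime H l u (x, ll, lu) (dxN, dlN, duN) = - Fmu g l u (\<sigma> * \<mu>) (x, ll, lu)
          \<and> sqrt ((\<Sum>i\<in>{i. xs$i = l$i \<or> xs$i = u$i}. (dxN$i)\<^sup>2)
                 + (\<Sum>i\<in>{i. xs$i \<noteq> l$i}. (dlN$i)\<^sup>2)
                 + (\<Sum>i\<in>{i. xs$i \<noteq> u$i}. (duN$i)\<^sup>2)) \<ge> C8 * \<mu> powr \<gamma>"
    assume hD: "(\<forall>i. xs$i = l$i \<longrightarrow> dx$i \<in> {dxS g H l u (\<sigma> * \<mu>) (x, ll, lu) i, dxCl l (\<sigma> * \<mu>) (x, ll, lu) i})
           \<and> (\<forall>i. xs$i = u$i \<longrightarrow> dx$i \<in> {dxS g H l u (\<sigma> * \<mu>) (x, ll, lu) i, dxCu u (\<sigma> * \<mu>) (x, ll, lu) i})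
           \<and> (\<forall>i. xs$i \<noteq> l$i \<and> xs$i \<noteq> u$i \<longrightarrow> dx$i = 0)
           \<and> (\<forall>i. dl$i = (if xs$i \<noteq> l$i then dlC l (\<sigma> * \<mu>) (x, ll, lu) i else 0))
           \<and> (\<forall>i. du$i = (if xs$i \<noteq> u$i then duC u (\<sigma> * \<mu>) (x, ll, lu) i else 0))"
    have \<mu>p: "\<mu> > 0" and \<mu>le: "\<mu> \<le> \<mu>bar" using h\<mu> by auto
    have \<mu>1: "\<mu> \<le> \<mu>hat" and \<mu>2: "\<mu> \<le> c0/(4*(\<bar>C4\<bar>+1))" and \<mu>3: "\<mu> \<le> c0^2/(8*(1+C1)*(M+1))"
      and \<mu>4: "\<mu> \<le> (C8^2/(3*N*E^2+1)) powr (1/(4-2*\<gamma>))"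
      using \<mu>le unfolding \<mu>bar_def by auto
    have z\<delta>: "dist (x, ll, lu) (xs, lls, lus) \<le> \<delta>" and xin: "\<forall>i. l$i < x$i \<and> x$i < u$i"
      and lpos: "\<forall>i. ll$i > 0 \<and> lu$i > 0" and ztr: "dist (x, ll, lu) (traj \<mu>) < c0/4"
      and Fres: "norm (Fmu g l u \<mu> (x, ll, lu)) \<le> C1 * \<mu>" using hz by auto
    have trd: "dist (traj \<mu>) (xs, lls, lus) \<le> C4*\<mu>" using traj_conv \<mu>p \<mu>1 by auto
    have "C4*\<mu> \<le> (\<bar>C4\<bar>+1)*\<mu>" using \<mu>p by (intro mult_right_mono) auto
    also have "\<dots> \<le> (\<bar>C4\<bar>+1)*(c0/(4*(\<bar>C4\<bar>+1)))" using \<mu>2 by (intro mult_left_mono) auto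
    also have "\<dots> = c0/4" by (simp add: field_simps)
    finally have "C4*\<mu> \<le> c0/4" .
    have dz: "dist (x, ll, lu) (xs, lls, lus) < c0/2"
      using dist_triangle[of "(x, ll, lu)" "(xs, lls, lus)" "traj \<mu>"] ztr trd \<open>C4*\<mu> \<le> c0/4\<close> by linarith
    have cb: "\<bar>x$i - xs$i\<bar> < c0/2 \<and> \<bar>ll$i - lls$i\<bar> < c0/2 \<and> \<bar>lu$i - lus$i\<bar> < c0/2" for i
      using comp_bounds[of "(x, ll, lu) - (xs, lls, lus)" i] dz by (auto simp: dist_norm)
    have res: "ll$i*(x$i-l$i) \<le> (1+C1)*\<mu> \<and> lu$i*(u$i-x$i) \<le> (1+C1)*\<mu>" for i
      using comp_bounds[of "Fmu g l u \<mu> (x, ll, lu)" i] Fres by (auto simp: Fmu_def algebra_simps)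
    have xcb: "x \<in> cball xs \<delta>"
      using dist_fst_le[of "(x, ll, lu)" "(xs, lls, lus)"] z\<delta> by (simp add: dist_commute)
    define cv where "cv = (\<chi> i. \<mu> - \<sigma>*\<mu> :: real^'n)"
    have Feq: "Fmu g l u (\<sigma>*\<mu>) (x, ll, lu) = Fmu g l u \<mu> (x, ll, lu) + (0, cv, cv)"
      unfolding cv_def by (simp add: Fmu_def vec_eq_iff algebra_simps)
    have ncv: "norm cv \<le> N*\<mu>"
    proof -
      have "norm cv \<le> (\<Sum>i\<in>UNIV. \<bar>cv$i\<bar>)" by (rule norm_le_l1_cart)
      also have "\<dots> = N*(\<mu> - \<sigma>*\<mu>)" unfolding cv_def N_def using \<sigma> \<mu>p by simp
      also have "\<dots> \<le> N*\<mu>" using Np \<sigma> \<mu>p by (intro mult_left_mono) auto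
      finally show ?thesis .
    qed
    have "norm ((0::real^'n), cv, cv) \<le> norm (0::real^'n) + norm (cv, cv)" by (rule norm_Pair_le)
    also have "\<dots> \<le> norm cv + norm cv" using norm_Pair_le[of cv cv] by simp
    finally have "norm ((0::real^'n), cv, cv) \<le> 2*N*\<mu>" using ncv by linarith
    hence nF: "norm (Fmu g l u (\<sigma>*\<mu>) (x, ll, lu)) \<le> (C1 + 2*N)*\<mu>"
      using Feq norm_triangle_ineq[of "Fmu g l u \<mu> (x, ll, lu)" "(0, cv, cv)"] Fres
      by (simp add: algebra_simps)
    have Neq: "Fprime H l u (x, ll, lu) (dxN, dlN, duN) = - Fmu g l u (\<sigma> * \<mu>) (x, ll, lu)" using hN by blast
    have "norm (dxN, dlN, duN) \<le> K1 * norm (Fprime H l u (x, ll, lu) (dxN, dlN, duN))" using K1 z\<delta> by blast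
    also have "\<dots> = K1 * norm (Fmu g l u (\<sigma> * \<mu>) (x, ll, lu))" using Neq by simp
    also have "\<dots> \<le> K1 * ((C1 + 2*N)*\<mu>)" using nF K1p by (intro mult_left_mono) auto
    finally have nN: "norm (dxN, dlN, duN) \<le> B*\<mu>" unfolding B_def by (simp add: mult.assoc)
    have nb: "\<bar>dxN$i\<bar> \<le> B*\<mu> \<and> \<bar>dlN$i\<bar> \<le> B*\<mu> \<and> \<bar>duN$i\<bar> \<le> B*\<mu>" for i
      using comp_bounds[of "(dxN, dlN, duN)" i] nN by auto
    have V1: "H x *v dxN - dlN + duN = -(g x - ll + lu)"
      and V2: "(\<chi> i. ll$i * dxN$i + (x$i - l$i) * dlN$i) = (- (\<chi> i. ll$i * (x$i - l$i) - \<sigma>*\<mu>) :: real^'n)"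
      and V3: "(\<chi> i. - lu$i * dxN$i + (u$i - x$i) * duN$i) = (- (\<chi> i. lu$i * (u$i - x$i) - \<sigma>*\<mu>) :: real^'n)"
      using Neq by (simp_all add: Fprime_def Fmu_def)
    have r1: "(H x *v dxN)$i - dlN$i + duN$i = -(g x$i - ll$i + lu$i)" for i
      using arg_cong[OF V1, of "\<lambda>v. v$i"] by simp
    have r2: "ll$i * dxN$i + (x$i - l$i) * dlN$i = -(ll$i * (x$i - l$i) - \<sigma>*\<mu>)" for i
      using arg_cong[OF V2, of "\<lambda>v. v$i"] by simp
    have r3: "- lu$i * dxN$i + (u$i - x$i) * duN$i = -(lu$i * (u$i - x$i) - \<sigma>*\<mu>)" for i
      using arg_cong[OF V3, of "\<lambda>v. v$i"] by simp
    define E0 where "E0 = 4*(1+C1)*B/c0^2"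
    have E0E: "E0*\<mu>^2 \<le> E*\<mu>^2"
    proof -
      have "4*(1+C1)*B \<le> 8*(1+C1)*B*(1+N*M)"
        using C1 Bp Np M0le by (simp add: algebra_simps mult_nonneg_nonneg add_nonneg_nonneg)
      hence "E0 \<le> E" unfolding E0_def E_def by (intro divide_right_mono) auto
      thus ?thesis by (intro mult_right_mono) auto
    qed
    have E0eq: "4*(1+C1)*B*\<mu>^2/c0^2 = E0*\<mu>^2" unfolding E0_def by simp
    have Rbd: "\<bar>(H x *v dxN)$i - H x$i$i * dxN$i\<bar> \<le> N*M*(B*\<mu>)" for i
      using Rb[of "H x" i M dxN "B*\<mu>"] Hb[OF xcb] nb unfolding N_def by (simp add: mult.assoc)
    have errl: "\<bar>dlN$i - dl$i\<bar> \<le> E*\<mu>^2" if "xs$i \<noteq> l$i" for i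
    proof -
      have "lls$i = 0" using compl[rule_format, of i] that by auto
      hence "x$i - l$i \<ge> c0/2" using c0l[of i] cb[of i] by linarith
      hence "\<bar>dlN$i - (- ll$i + \<sigma>*\<mu>/(x$i - l$i))\<bar> \<le> 4*(1+C1)*B*\<mu>^2/c0^2"
        using core[of "ll$i" c0 "x$i - l$i" C1 \<mu> "dxN$i" B "dlN$i" "\<sigma>*\<mu>"] lpos c0p res nb \<mu>p C1 r2 by auto
      moreover have "dl$i = - ll$i + \<sigma>*\<mu>/(x$i - l$i)" using hD that by (simp add: dlC_def)
      ultimately show ?thesis using E0E E0eq by simp
    qed
    have erru: "\<bar>duN$i - du$i\<bar> \<le> E*\<mu>^2" if "xs$i \<noteq> u$i" for i
    proof -
      have "lus$i = 0" using compl[rule_format, of i] that by auto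
      hence "u$i - x$i \<ge> c0/2" using c0u[of i] cb[of i] by linarith
      moreover have "lu$i * (- dxN$i) + (u$i - x$i) * duN$i = -(lu$i * (u$i - x$i) - \<sigma>*\<mu>)" using r3[of i] by simp
      ultimately have "\<bar>duN$i - (- lu$i + \<sigma>*\<mu>/(u$i - x$i))\<bar> \<le> 4*(1+C1)*B*\<mu>^2/c0^2"
        using core[of "lu$i" c0 "u$i - x$i" C1 \<mu> "- dxN$i" B "duN$i" "\<sigma>*\<mu>"] lpos c0p res nb \<mu>p C1 by auto
      moreover have "du$i = - lu$i + \<sigma>*\<mu>/(u$i - x$i)" using hD that by (simp add: duC_def)
      ultimately show ?thesis using E0E E0eq by simp
    qed
    have errS: "\<bar>dxN$i - dxS g H l u (\<sigma> * \<mu>) (x, ll, lu) i\<bar> \<le> E*\<mu>^2"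
      if dl: "H x$i$i + ll$i/(x$i - l$i) + lu$i/(u$i - x$i) \<ge> c0^2/(8*(1+C1)*\<mu>)" for i
    proof -
      have "\<bar>dxN$i - (-(1/(H x$i$i + ll$i/(x$i - l$i) + lu$i/(u$i - x$i)))*(g x$i - \<sigma>*\<mu>*(1/(x$i - l$i) - 1/(u$i - x$i))))\<bar>
            \<le> 8*(1+C1)*B*(1+N*M)/c0^2*\<mu>^2"
        apply (rule S_err[where R="(H x *v dxN)$i - H x$i$i * dxN$i" and h="H x$i$i" and dl="dlN$i" and du="duN$i"])
        using xin dl c0p \<mu>p C1 Rbd Np M0le Bp r1[of i] r2[of i] r3[of i] by (auto simp: algebra_simps)
      thus ?thesis unfolding E_def dxS_def by (simp add: Let_def)
    qed
    have errx: "\<bar>dxN$i - dx$i\<bar> \<le> E*\<mu>^2" if "xs$i = l$i \<or> xs$i = u$i" for i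
    proof (cases "xs$i = l$i")
      case True
      have a: "lls$i \<ge> c0" using c0l[of i] True by simp
      have b: "-(ll$i - lls$i) < c0/2" using cb[of i] abs_less_iff by blast
      have "ll$i \<ge> c0/2" using a b by linarith
      have xl: "x$i - l$i > 0" "u$i - x$i > 0" using xin by auto
      have "dx$i \<in> {dxS g H l u (\<sigma> * \<mu>) (x, ll, lu) i, dxCl l (\<sigma> * \<mu>) (x, ll, lu) i}" using hD True by blast
      moreover have "\<bar>dxN$i - dxCl l (\<sigma> * \<mu>) (x, ll, lu) i\<bar> \<le> E*\<mu>^2"
      proof -
        have "(x$i - l$i) * dlN$i + ll$i * dxN$i = -((x$i - l$i) * ll$i - \<sigma>*\<mu>)" using r2[of i] by (simp add: algebra_simps)
        moreover have "(x$i - l$i) * ll$i \<le> (1+C1)*\<mu>" using res[of i] by (simp add: mult.commute)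
        ultimately have "\<bar>dxN$i - (- (x$i - l$i) + \<sigma>*\<mu>/ll$i)\<bar> \<le> 4*(1+C1)*B*\<mu>^2/c0^2"
          using core[of "x$i - l$i" c0 "ll$i" C1 \<mu> "dlN$i" B "dxN$i" "\<sigma>*\<mu>"] xl \<open>ll$i \<ge> c0/2\<close> c0p nb \<mu>p C1 by auto
        thus ?thesis using E0E E0eq by (simp add: dxCl_def)
      qed
      moreover have "\<bar>dxN$i - dxS g H l u (\<sigma> * \<mu>) (x, ll, lu) i\<bar> \<le> E*\<mu>^2"
        apply (rule errS)
        apply (rule d_low[where M=M])
        using \<open>ll$i \<ge> c0/2\<close> xl res lpos Hb[OF xcb] \<mu>3 M0le c0p \<mu>p C1 less_imp_le[OF conjunct2[OF lpos[rule_format, of i]]] less_imp_le[OF conjunct1[OF lpos[rule_format, of i]]] by auto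
      ultimately show ?thesis by auto
    next
      case False
      hence True: "xs$i = u$i" using that by simp
      have a: "lus$i \<ge> c0" using c0u[of i] True by simp
      have b: "-(lu$i - lus$i) < c0/2" using cb[of i] abs_less_iff by blast
      have "lu$i \<ge> c0/2" using a b by linarith
      have xl: "x$i - l$i > 0" "u$i - x$i > 0" using xin by auto
      have "dx$i \<in> {dxS g H l u (\<sigma> * \<mu>) (x, ll, lu) i, dxCu u (\<sigma> * \<mu>) (x, ll, lu) i}" using hD True by blast
      moreover have "\<bar>dxN$i - dxCu u (\<sigma> * \<mu>) (x, ll, lu) i\<bar> \<le> E*\<mu>^2"
      proof -
        have "(u$i - x$i) * duN$i + lu$i * (- dxN$i) = -((u$i - x$i) * lu$i - \<sigma>*\<mu>)" using r3[of i] by (simp add: algebra_simps)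
        moreover have "(u$i - x$i) * lu$i \<le> (1+C1)*\<mu>" using res[of i] by (simp add: mult.commute)
        ultimately have "\<bar>- dxN$i - (- (u$i - x$i) + \<sigma>*\<mu>/lu$i)\<bar> \<le> 4*(1+C1)*B*\<mu>^2/c0^2"
          using core[of "u$i - x$i" c0 "lu$i" C1 \<mu> "duN$i" B "- dxN$i" "\<sigma>*\<mu>"] xl \<open>lu$i \<ge> c0/2\<close> c0p nb \<mu>p C1 by auto
        moreover have "\<bar>- dxN$i - (- (u$i - x$i) + \<sigma>*\<mu>/lu$i)\<bar> = \<bar>dxN$i - dxCu u (\<sigma> * \<mu>) (x, ll, lu) i\<bar>"
        proof -
          have "- dxN$i - (- (u$i - x$i) + \<sigma>*\<mu>/lu$i) = -(dxN$i - dxCu u (\<sigma> * \<mu>) (x, ll, lu) i)"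
            by (simp add: dxCu_def)
          thus ?thesis by (metis abs_minus_cancel)
        qed
        ultimately show ?thesis using E0E E0eq by simp
      qed
      moreover have "\<bar>dxN$i - dxS g H l u (\<sigma> * \<mu>) (x, ll, lu) i\<bar> \<le> E*\<mu>^2"
      proof (rule errS)
        have "H x$i$i + lu$i/(u$i - x$i) + ll$i/(x$i - l$i) \<ge> c0^2/(8*(1+C1)*\<mu>)"
          apply (rule d_low[where M=M])
          using \<open>lu$i \<ge> c0/2\<close> xl res lpos Hb[OF xcb] \<mu>3 M0le c0p \<mu>p C1 less_imp_le[OF conjunct2[OF lpos[rule_format, of i]]] less_imp_le[OF conjunct1[OF lpos[rule_format, of i]]] by auto
        thus "H x$i$i + ll$i/(x$i - l$i) + lu$i/(u$i - x$i) \<ge> c0^2/(8*(1+C1)*\<mu>)" by (simp add: add_ac)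
      qed
      ultimately show ?thesis by auto
    qed
    have eq1: "((x, ll, lu) + (dxN, dlN, duN)) - ((x, ll, lu) + (dx, dl, du)) = (dxN - dx, dlN - dl, duN - du)" by simp
    have eq2: "((x, ll, lu) + (dxN, dlN, duN)) - (x, ll, lu) = (dxN, dlN, duN)" by simp
    have et: "3*real CARD('n)*(E*\<mu>^2)^2 \<le> (C8 * \<mu> powr \<gamma>)^2"
      using powr_part[OF \<mu>p \<mu>4 \<gamma>(2) C8 Np] unfolding N_def .
    show "norm (((x, ll, lu) + (dxN, dlN, duN)) - ((x, ll, lu) + (dx, dl, du)))
               \<le> norm (((x, ll, lu) + (dxN, dlN, duN)) - (x, ll, lu))"
      unfolding eq1 eq2
    proof (rule final_comb[where Ax="\<lambda>i. xs$i = l$i \<or> xs$i = u$i" and Il="\<lambda>i. xs$i \<noteq> l$i" and Iu="\<lambda>i. xs$i \<noteq> u$i"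
          and e="E*\<mu>^2" and t="C8 * \<mu> powr \<gamma>"])
      show "\<forall>i. \<not> (xs$i = l$i \<or> xs$i = u$i) \<longrightarrow> dx$i = 0" using hD by auto
      show "\<forall>i. \<not> (xs$i \<noteq> l$i) \<longrightarrow> dl$i = 0" using hD by auto
      show "\<forall>i. \<not> (xs$i \<noteq> u$i) \<longrightarrow> du$i = 0" using hD by auto
      show "\<forall>i. (xs$i = l$i \<or> xs$i = u$i) \<longrightarrow> \<bar>dxN$i - dx$i\<bar> \<le> E*\<mu>^2" using errx by blast
      show "\<forall>i. (xs$i \<noteq> l$i) \<longrightarrow> \<bar>dlN$i - dl$i\<bar> \<le> E*\<mu>^2" using errl by blast
      show "\<forall>i. (xs$i \<noteq> u$i) \<longrightarrow> \<bar>duN$i - du$i\<bar> \<le> E*\<mu>^2" using erru by blast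
      show "3*real CARD('n)*(E*\<mu>^2)^2 \<le> (C8 * \<mu> powr \<gamma>)^2" by (rule et)
      show "C8 * \<mu> powr \<gamma> \<le> sqrt ((\<Sum>i\<in>{i. xs$i = l$i \<or> xs$i = u$i}. (dxN$i)\<^sup>2)
                 + (\<Sum>i\<in>{i. xs$i \<noteq> l$i}. (dlN$i)\<^sup>2) + (\<Sum>i\<in>{i. xs$i \<noteq> u$i}. (duN$i)\<^sup>2))"
        using hN by blast
      show "0 \<le> C8 * \<mu> powr \<gamma>" using C8 by simp
    qed
  qed
qed

end
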